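(* Let $\mathbf{M}=(\mathcal{S},s_I,\mathcal{A},P,\mathcal{Z},O,R)$ be a POMDP and let $\mathbf{M}_{fo}$ be its corresponding fully observable MDP. Then for every finite $N\in\mathbb{N}$, \[ \sup_{\pi \in \Pi(\mathbf{M})}H^{\pi}(S_1, S_2,\ldots, S_N)\;\leq\; \sup_{\pi \in \Pi(\mathbf{M}_{fo})}H^{\pi}(S_1, S_2,\ldots, S_N). \]
   Context: A POMDP is a tuple $\mathbf{M}=(\mathcal{S},s_I,\mathcal{A},P,\mathcal{Z},O,R)$ where $\mathcal{S}$ is a finite set of states, $s_I\in\mathcal{S}$ is the unique initial state, $\mathcal{A}$ is a finite set of actions (all available in every state), $P:\mathcal{S}\times\mathcal{A}\to\Delta(\mathcal{S})$ is a transition function (write $P_{s,a,s'}=P(s'|s,a)$), $\mathcal{Z}$ is a finite set of observations, $O:\mathcal{S}\to\Delta(\mathcal{Z})$ is an observation function (write $O_{s,z}=O(z|s)$), and $R:\mathcal{S}\times\mathcal{A}\to\mathbb{R}$ is a reward function. An observation history of length $t$ is a sequence $(z_1,a_1,z_2,a_2,\ldots,z_t)$ of observations and actions. A controller $\pi$ is a map from observation histories of all lengths to probability distributions over $\mathcal{A}$; $\Pi(\mathbf{M})$ denotes the set of all controllers. A controller $\pi$ induces a stochastic process as follows: $S_1=s_I$; at each time $t$ an observation $Z_t$ is drawn from $O(\cdot|S_t)$, an action $A_t$ is drawn from $\pi(\cdot\mid Z_1,A_1,\ldots,Z_t)$, and $S_{t+1}$ is drawn from $P(\cdot|S_t,A_t)$.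 $H^{\pi}(S_1,\ldots,S_N)$ denotes the joint Shannon entropy of $(S_1,\ldots,S_N)$ under this process (convention $0\log 0=0$). The corresponding fully observable MDP $\mathbf{M}_{fo}$ is obtained from $\mathbf{M}$ by setting $\mathcal{Z}=\mathcal{S}$ and $O_{s,s}=1$ for all $s\in\mathcal{S}$ (so its controllers may depend on the full state–action history). *)

theory Defs
  imports "HOL-Probability.Probability_Mass_Function"
begin

text \<open>A POMDP with finite state type 's, action type 'a, observation type 'z, given by
  initial state sI, transition kernel P s a (a pmf over successor states), observation
  function Obs s (a pmf over observations) and reward R (irrelevant for the entropy).
  An observation history (z_1,a_1,...,z_t) is represented by the list of past pairs
  [(z_1,a_1),...,(z_{t-1},a_{t-1})] together with the current observation z_t.\<close>

type_synonym ('z, 'a) controller = "('z \<times> 'a) list \<Rightarrow> 'z \<Rightarrow> 'a pmf"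

text \<open>traj P Obs \<pi> n h s: distribution of the next n states (S_t,...,S_{t+n-1}),
  starting with S_t = s and past history h.\<close>
fun traj :: "('s \<Rightarrow> 'a \<Rightarrow> 's pmf) \<Rightarrow> ('s \<Rightarrow> 'z pmf) \<Rightarrow> ('z, 'a) controller
             \<Rightarrow> nat \<Rightarrow> ('z \<times> 'a) list \<Rightarrow> 's \<Rightarrow> 's list pmf" where
  "traj P Obs \<pi> 0 h s = return_pmf []"
| "traj P Obs \<pi> (Suc n) h s =
     bind_pmf (Obs s) (\<lambda>z. bind_pmf (\<pi> h z) (\<lambda>a. bind_pmf (P s a) (\<lambda>s'.
       map_pmf (\<lambda>rest. s # rest) (traj P Obs \<pi> n (h @ [(z, a)]) s'))))"

definition state_dist :: "'s \<Rightarrow> ('s \<Rightarrow> 'a \<Rightarrow> 's pmf) \<Rightarrow> ('s \<Rightarrow> 'z pmf)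
             \<Rightarrow> ('z, 'a) controller \<Rightarrow> nat \<Rightarrow> 's list pmf" where
  "state_dist sI P Obs \<pi> N = traj P Obs \<pi> N [] sI"

text \<open>Shannon entropy (base 2) of a finitely supported pmf; 0 log 0 = 0 is automatic
  since only points of the support are summed.\<close>
definition shannon_entropy :: "'b pmf \<Rightarrow> real" where
  "shannon_entropy p = - (\<Sum>x\<in>set_pmf p. pmf p x * log 2 (pmf p x))"

definition state_entropy :: "'s \<Rightarrow> ('s \<Rightarrow> 'a \<Rightarrow> 's pmf) \<Rightarrow> ('s \<Rightarrow> 'z pmf)
             \<Rightarrow> ('z, 'a) controller \<Rightarrow> nat \<Rightarrow> real" where
  "state_entropy sI P Obs \<pi> N = shannon_entropy (state_dist sI P Obs \<pi> N)"

text \<open>Fully observable version: observation set = state set, Obs(s|s) = 1.\<close>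
definition fo_obs :: "'s \<Rightarrow> 's pmf" where
  "fo_obs s = return_pmf s"

end

theory Submission
  imports Defs
begin

definition jointd :: "('s \<Rightarrow> 'z pmf) \<Rightarrow> ('z, 'a) controller \<Rightarrow> ('z \<times> 'a) list pmf \<Rightarrow> 's
     \<Rightarrow> (('z \<times> 'a) list \<times> 'a) pmf" where
  "jointd Obs \<pi> \<mu> s = bind_pmf \<mu> (\<lambda>h. bind_pmf (Obs s) (\<lambda>z.
      map_pmf (\<lambda>a. (h @ [(z, a)], a)) (\<pi> h z)))"

definition stepd :: "('s \<Rightarrow> 'z pmf) \<Rightarrow> ('z, 'a) controller \<Rightarrow> ('z \<times> 'a) list pmf \<Rightarrow> ('s \<times> 'a)
     \<Rightarrow> ('z \<times> 'a) list pmf" where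
  "stepd Obs \<pi> \<mu> sa = map_pmf fst (cond_pmf (jointd Obs \<pi> \<mu> (fst sa)) {x. snd x = snd sa})"

definition postd :: "('s \<Rightarrow> 'z pmf) \<Rightarrow> ('z, 'a) controller \<Rightarrow> ('s \<times> 'a) list \<Rightarrow> ('z \<times> 'a) list pmf" where
  "postd Obs \<pi> g = foldl (stepd Obs \<pi>) (return_pmf []) g"

definition simc :: "('s \<Rightarrow> 'z pmf) \<Rightarrow> ('z, 'a) controller \<Rightarrow> ('s, 'a) controller" where
  "simc Obs \<pi> g s = map_pmf snd (jointd Obs \<pi> (postd Obs \<pi> g) s)"

lemma disint:
  fixes J :: "('b \<times> 'a) pmf"
  shows "bind_pmf (map_pmf snd J) (\<lambda>a. cond_pmf J {x. snd x = a}) = J"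
proof (rule bind_cond_pmf_cancel)
  show "\<And>x. x \<in> set_pmf (map_pmf snd J) \<Longrightarrow> set_pmf J \<inter> {y. snd y = x} \<noteq> {}" by auto
  show "\<And>y. y \<in> set_pmf J \<Longrightarrow> set_pmf (map_pmf snd J) \<inter> {x. snd y = x} \<noteq> {}" by auto
  show "\<And>x y. x \<in> set_pmf (map_pmf snd J) \<Longrightarrow> y \<in> set_pmf J \<Longrightarrow> snd y = x \<Longrightarrow>
     measure_pmf.prob J {y. snd y = x} = measure_pmf.prob (map_pmf snd J) {xa. snd y = xa}"
    by (auto simp: measure_map_pmf vimage_def intro!: arg_cong[where f="measure_pmf.prob J"])
qed

lemma sim_traj:
  "traj P fo_obs (simc Obs \<pi>) n g s = bind_pmf (postd Obs \<pi> g) (\<lambda>h. traj P Obs \<pi> n h s)"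
proof (induction n arbitrary: g s)
  case 0
  then show ?case by (simp add: bind_return_pmf')
next
  case (Suc n)
  define J where "J = jointd Obs \<pi> (postd Obs \<pi> g) s"
  define K where "K = (\<lambda>h' a. bind_pmf (P s a) (\<lambda>s'. map_pmf ((#) s) (traj P Obs \<pi> n h' s')))"
  have post: "postd Obs \<pi> (g @ [(s, a)]) = map_pmf fst (cond_pmf J {x. snd x = a})" for a
    by (simp add: postd_def stepd_def J_def)
  have "traj P fo_obs (simc Obs \<pi>) (Suc n) g s =
     bind_pmf (map_pmf snd J) (\<lambda>a. bind_pmf (map_pmf fst (cond_pmf J {x. snd x = a})) (\<lambda>h'. K h' a))"
    unfolding K_def
    by (simp add: fo_obs_def bind_return_pmf Suc post simc_def J_def map_bind_pmf bind_commute_pmf[of "P s _"])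
  also have "\<dots> = bind_pmf (map_pmf snd J) (\<lambda>a. bind_pmf (cond_pmf J {x. snd x = a}) (\<lambda>x. K (fst x) (snd x)))"
  proof (rule bind_pmf_cong[OF refl])
    fix a assume a: "a \<in> set_pmf (map_pmf snd J)"
    then have ne: "set_pmf J \<inter> {x. snd x = a} \<noteq> {}" by auto
    show "bind_pmf (map_pmf fst (cond_pmf J {x. snd x = a})) (\<lambda>h'. K h' a) =
          bind_pmf (cond_pmf J {x. snd x = a}) (\<lambda>x. K (fst x) (snd x))"
      unfolding bind_map_pmf
      by (rule bind_pmf_cong[OF refl]) (use set_cond_pmf[OF ne] in auto)
  qed
  also have "\<dots> = bind_pmf J (\<lambda>x. K (fst x) (snd x))"
    by (simp add: bind_assoc_pmf[symmetric] disint)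
  also have "\<dots> = bind_pmf (postd Obs \<pi> g) (\<lambda>h. traj P Obs \<pi> (Suc n) h s)"
    by (simp add: J_def jointd_def K_def bind_assoc_pmf bind_map_pmf map_bind_pmf)
  finally show ?case .
qed

lemma sim_dist: "state_dist sI P fo_obs (simc Obs \<pi>) N = state_dist sI P Obs \<pi> N"
  by (simp add: state_dist_def sim_traj postd_def bind_return_pmf)

lemma traj_len: "set_pmf (traj P Obs \<pi> n h s) \<subseteq> {xs. set xs \<subseteq> UNIV \<and> length xs = n}"
  by (induction n arbitrary: h s) (auto, blast)

lemma term_bound:
  fixes p :: real assumes "0 \<le> p" "p \<le> 1"
  shows "- (p * log 2 p) \<le> 1 / ln 2"
proof (cases "p = 0")
  case True then show ?thesis by simp
next
  case False
  then have p: "0 < p" using assms by simp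
  have "ln (1/p) \<le> 1/p - 1" by (rule ln_le_minus_one) (use p in simp)
  then have "- ln p \<le> 1/p - 1" using p by (simp add: ln_div)
  then have "- (p * ln p) \<le> 1 - p" using p by (simp add: field_simps)
  then have "- (p * ln p) \<le> 1" using p by linarith
  then show ?thesis by (simp add: log_def field_simps)
qed

lemma entropy_bound:
  fixes \<pi> :: "('z, 'a) controller" and sI :: "'s::finite"
  shows "state_entropy sI P Obs \<pi> N \<le> real (card {xs::'s list. set xs \<subseteq> UNIV \<and> length xs = N}) / ln 2"
proof -
  let ?T = "{xs::'s list. set xs \<subseteq> UNIV \<and> length xs = N}"
  let ?p = "state_dist sI P Obs \<pi> N"
  have fin: "finite ?T" by (rule finite_lists_length_eq) simp
  have sub: "set_pmf ?p \<subseteq> ?T" unfolding state_dist_def by (rule traj_len)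
  have "state_entropy sI P Obs \<pi> N = (\<Sum>x\<in>set_pmf ?p. - (pmf ?p x * log 2 (pmf ?p x)))"
    by (simp add: state_entropy_def shannon_entropy_def sum_negf)
  also have "\<dots> = (\<Sum>x\<in>?T. - (pmf ?p x * log 2 (pmf ?p x)))"
    by (rule sum.mono_neutral_left[OF fin sub]) (auto simp: set_pmf_iff)
  also have "\<dots> \<le> (\<Sum>x\<in>?T. 1 / ln 2)"
    by (rule sum_mono) (rule term_bound, auto simp: pmf_le_1)
  finally show ?thesis by simp
qed

theorem theorem1:
  fixes sI :: "'s::finite"
    and P :: "'s \<Rightarrow> 'a::finite \<Rightarrow> 's pmf"
    and Obs :: "'s \<Rightarrow> 'z::finite pmf"
    and R :: "'s \<Rightarrow> 'a \<Rightarrow> real"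
    and N :: nat
  shows "(SUP \<pi> :: ('z, 'a) controller. state_entropy sI P Obs \<pi> N)
           \<le> (SUP \<pi> :: ('s, 'a) controller. state_entropy sI P fo_obs \<pi> N)"
proof (rule cSUP_mono)
  show "(UNIV :: ('z, 'a) controller set) \<noteq> {}" by simp
  show "bdd_above (range (\<lambda>\<pi> :: ('s, 'a) controller. state_entropy sI P fo_obs \<pi> N))"
    by (rule bdd_aboveI2) (rule entropy_bound)
  fix \<pi> :: "('z, 'a) controller"
  show "\<exists>m\<in>UNIV. state_entropy sI P Obs \<pi> N \<le> state_entropy sI P fo_obs m N"
    by (rule bexI[of _ "simc Obs \<pi>"]) (simp_all add: state_entropy_def sim_dist)
qed

end
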